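(* Let $t$ be an $\mathrm{SL}_2$-tiling and $i<j$ integers. Then $c_{ij}$ and $d_{ij}$ are positive integers.
   Context: An $\mathrm{SL}_2$-tiling is a map $t:\mathbb{Z}\times\mathbb{Z}\to\{1,2,3,\dots\}$, $(i,j)\mapsto t_{ij}$, with $t_{ij}t_{i+1,j+1}-t_{i,j+1}t_{i+1,j}=1$ for all $i,j$. For integers $i<j$ and any integer $a$ put $c_{ij}=t_{ia}t_{j,a+1}-t_{i,a+1}t_{ja}$ and $d_{ij}=t_{ai}t_{a+1,j}-t_{aj}t_{a+1,i}$; these values do not depend on the choice of $a$ (a known fact about $\mathrm{SL}_2$-tilings). *)

theory Defs
  imports Main
begin

definition SL2_tiling :: "(int \<Rightarrow> int \<Rightarrow> int) \<Rightarrow> bool" where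
  "SL2_tiling t \<longleftrightarrow> (\<forall>i j. t i j \<ge> 1) \<and>
     (\<forall>i j. t i j * t (i+1) (j+1) - t i (j+1) * t (i+1) j = 1)"

(* c_ij computed using the column pair (a, a+1) *)
definition cval :: "(int \<Rightarrow> int \<Rightarrow> int) \<Rightarrow> int \<Rightarrow> int \<Rightarrow> int \<Rightarrow> int" where
  "cval t a i j = t i a * t j (a+1) - t i (a+1) * t j a"

(* d_ij computed using the row pair (a, a+1) *)
definition dval :: "(int \<Rightarrow> int \<Rightarrow> int) \<Rightarrow> int \<Rightarrow> int \<Rightarrow> int \<Rightarrow> int" where
  "dval t a i j = t a i * t (a+1) j - t a j * t (a+1) i"

end

theory Submission
  imports Defs
begin

lemma gen_pos:
  fixes f g :: "int \<Rightarrow> int"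
  assumes pf: "\<And>k. f k > 0" and pg: "\<And>k. g k > 0"
    and d: "\<And>k. f k * g (k+1) - g k * f (k+1) = 1"
  shows "f i * g (i + 1 + int n) - g i * f (i + 1 + int n) > 0"
proof (induction n)
  case 0
  then show ?case using d[of i] by simp
next
  case (Suc n)
  define j where "j = i + 1 + int n"
  have A: "f i * g j > g i * f j" using Suc j_def by simp
  have B: "f j * g (j+1) > g j * f (j+1)" using d[of j] by simp
  have 1: "f i * (f j * g (j+1)) > f i * (g j * f (j+1))"
    using B pf[of i] by (rule mult_strict_left_mono[OF _ ]) 
  have 2: "(f i * g j) * f (j+1) > (g i * f j) * f (j+1)"
    using A pf[of "j+1"] by (rule mult_strict_right_mono)
  have 3: "f j * (f i * g (j+1)) > f j * (g i * f (j+1))"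
    using 1 2 by (simp add: algebra_simps)
  have "f i * g (j+1) > g i * f (j+1)"
    using 3 pf[of j] by (simp add: mult_less_cancel_left)
  moreover have "i + 1 + int (Suc n) = j + 1" using j_def by simp
  ultimately show ?case by (metis diff_gt_0_iff_gt)
qed

lemma gen_pos2:
  fixes f g :: "int \<Rightarrow> int"
  assumes pf: "\<And>k. f k > 0" and pg: "\<And>k. g k > 0"
    and d: "\<And>k. f k * g (k+1) - g k * f (k+1) = 1" and "i < j"
  shows "f i * g j - g i * f j > 0"
proof -
  obtain n where "j = i + 1 + int n" using \<open>i < j\<close>
    by (metis add.commute add.left_commute zless_iff_Suc_zadd of_nat_Suc)
  then show ?thesis using gen_pos[of f g, OF pf pg d] by simp
qed

theorem proposition5p6:
  fixes t :: "int \<Rightarrow> int \<Rightarrow> int" and i j a :: int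
  assumes "SL2_tiling t" and "i < j"
  shows "cval t a i j > 0 \<and> dval t a i j > 0"
proof
  have pos: "\<And>x y. t x y > 0" and d: "\<And>x y. t x y * t (x+1) (y+1) - t x (y+1) * t (x+1) y = 1"
    using assms(1) unfolding SL2_tiling_def by (auto simp: less_le_trans[of 0 1])
  have "(\<lambda>k. t k a) i * (\<lambda>k. t k (a+1)) j - (\<lambda>k. t k (a+1)) i * (\<lambda>k. t k a) j > 0"
    by (rule gen_pos2[of "\<lambda>k. t k a" "\<lambda>k. t k (a+1)", OF pos pos _ assms(2)]) (use d in \<open>simp add: mult.commute\<close>)
  then show "cval t a i j > 0" unfolding cval_def by (simp add: mult.commute)
  have "(\<lambda>k. t a k) i * (\<lambda>k. t (a+1) k) j - (\<lambda>k. t (a+1) k) i * (\<lambda>k. t a k) j > 0"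
    by (rule gen_pos2[of "\<lambda>k. t a k" "\<lambda>k. t (a+1) k", OF pos pos _ assms(2)]) (use d in \<open>simp add: mult.commute\<close>)
  then show "dval t a i j > 0" unfolding dval_def by (simp add: mult.commute)
qed

end
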